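(* Let $\mathcal T$ be a theory of $\mathsf{LGI}$, let $\alpha,\beta$ be basic expressions and $c,d\in[0,1]$. If every element of $\tau(\alpha,c)$ and every element of $\tau(\beta,d)$ is provable from $\mathcal T$ in $\mathsf{LGI}$, then so is every element of each of the sets $\tau(\alpha\land\beta,\min(c,d))$, $\tau(\alpha\lor\beta,\max(c,d))$, $\tau(\alpha\odot\beta,c\odot d)$ and $\tau(\sim\alpha,1-c)$.
   Context: Fix a continuous t-norm $\odot$ on $[0,1]$ and let $c\oplus d = 1-((1-c)\odot(1-d))$. Write $c\odot_{\L} d=\max(c+d-1,0)$, $c\oplus_{\L} d=\min(c+d,1)$. Syntax of $\mathsf{LGI}$: countably many variables $\phi_0,\phi_1,\dots$ and constants $\bot,\top$. Basic expressions are built from variables and constants by binary $\land,\lor,\odot$ and unary $\sim$. A graded implication is written $\alpha\Rightarrow_c\beta$ with $\alpha,\beta$ basic expressions, $c\in[0,1]$. Formulas are built from graded implications by classical $\land,\lor,\lnot$; $\Phi\to\Psi$ abbreviates $\lnot\Phi\lor\Psi$. A theory is a set of formulas. For a basic expression $\alpha$ and $c\in[0,1]$, $\tau(\alpha,c)=\{\top\Rightarrow_t\alpha : t\in[0,1],\ t<c\}\cup\{\alpha\Rightarrow_{1-t}\bot : t\in[0,1],\ t>c\}$. Calculus $\mathsf{LGI}$: axioms are (i) all substitution instances (by graded implications) of classical propositional tautologies; (ii) for all basic expressions $\alpha,\beta,\gamma$ and $c,d\in[0,1]$: ($\land_1$) $(\alpha\Rightarrow_d\beta)\land(\alpha\Rightarrow_d\gamma)\to(\alpha\Rightarrow_d\beta\land\gamma)$;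 ($\land_2$) $\alpha\land\beta\Rightarrow_1\alpha$; ($\land_3$) $\alpha\land\beta\Rightarrow_1\beta$; ($\lor_1$) $(\alpha\Rightarrow_d\gamma)\land(\beta\Rightarrow_d\gamma)\to(\alpha\lor\beta\Rightarrow_d\gamma)$; ($\lor_2$) $\alpha\Rightarrow_1\alpha\lor\beta$; ($\lor_3$) $\beta\Rightarrow_1\alpha\lor\beta$; ($\odot_1$) $(\top\Rightarrow_c\alpha)\land(\top\Rightarrow_d\beta)\to(\top\Rightarrow_{c\odot d}\alpha\odot\beta)$; ($\odot_2$) $(\alpha\Rightarrow_c\bot)\land(\beta\Rightarrow_d\bot)\to(\alpha\odot\beta\Rightarrow_{c\oplus d}\bot)$; ($\odot_3$) $\top\Rightarrow_1\top\odot\top$; ($\sim_1$) $(\alpha\Rightarrow_d\beta)\to(\sim\beta\Rightarrow_d\sim\alpha)$; ($\sim_2$) $\sim\sim\alpha\Rightarrow_1\alpha$; ($\sim_3$) $\alpha\Rightarrow_1\sim\sim\alpha$; ($\top$) $\alpha\Rightarrow_1\top$; ($\bot$) $\bot\Rightarrow_1\alpha$; (0) $\alpha\Rightarrow_0\beta$; ($c$) $\alpha\Rightarrow_c\alpha$; (inkons) $\lnot(\top\Rightarrow_c\bot)$ for $c>0$; (trans$_1$) $(\alpha\Rightarrow_c\beta)\land(\beta\Rightarrow_d\gamma)\to(\alpha\Rightarrow_{c\odot_{\L}d}\gamma)$; (trans$_2$) $(\alpha\Rightarrow_c\bot)\land(\top\Rightarrow_d\beta)\to(\alpha\Rightarrow_{c\oplus_{\L}d}\beta)$;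 (lin$_1$) $(\alpha\Rightarrow_1\beta)\lor(\beta\Rightarrow_1\alpha)$; (lin$_2$) $(\top\Rightarrow_d\alpha)\lor(\alpha\Rightarrow_{1-d}\bot)$. The only rule is modus ponens. $\mathcal T\vdash_{\mathsf{LGI}}\Phi$ means $\Phi$ has a finite derivation from axioms and elements of $\mathcal T$ by modus ponens. *)

theory Defs
  imports "HOL-Analysis.Analysis"
begin

definition continuous_tnorm :: "(real \<Rightarrow> real \<Rightarrow> real) \<Rightarrow> bool" where
  "continuous_tnorm tn \<longleftrightarrow>
     (\<forall>x\<in>{0..1}. \<forall>y\<in>{0..1}. tn x y \<in> {0..1}) \<and>
     (\<forall>x\<in>{0..1}. \<forall>y\<in>{0..1}. tn x y = tn y x) \<and>
     (\<forall>x\<in>{0..1}. \<forall>y\<in>{0..1}. \<forall>z\<in>{0..1}. tn (tn x y) z = tn x (tn y z)) \<and>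
     (\<forall>x\<in>{0..1}. \<forall>y\<in>{0..1}. \<forall>z\<in>{0..1}. x \<le> y \<longrightarrow> tn x z \<le> tn y z) \<and>
     (\<forall>x\<in>{0..1}. tn x 1 = x) \<and>
     continuous_on ({0..1} \<times> {0..1}) (\<lambda>(x, y). tn x y)"

definition tconorm :: "(real \<Rightarrow> real \<Rightarrow> real) \<Rightarrow> real \<Rightarrow> real \<Rightarrow> real" where
  "tconorm tn c d = 1 - tn (1 - c) (1 - d)"

definition luk_and :: "real \<Rightarrow> real \<Rightarrow> real" where
  "luk_and c d = max (c + d - 1) 0"

definition luk_or :: "real \<Rightarrow> real \<Rightarrow> real" where
  "luk_or c d = min (c + d) 1"

datatype bexp = Var nat | Bot | Top
  | BAnd bexp bexp | BOr bexp bexp | BOdot bexp bexp | BNeg bexp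

text \<open>Formulas: classical combinations of graded implications GImp a c b, i.e. a =>_c b.\<close>
datatype fm = GImp bexp real bexp | FAnd fm fm | FOr fm fm | FNot fm

definition FImp :: "fm \<Rightarrow> fm \<Rightarrow> fm" where
  "FImp P Q = FOr (FNot P) Q"

fun wf_fm :: "fm \<Rightarrow> bool" where
  "wf_fm (GImp a c b) = (0 \<le> c \<and> c \<le> 1)"
| "wf_fm (FAnd P Q) = (wf_fm P \<and> wf_fm Q)"
| "wf_fm (FOr P Q) = (wf_fm P \<and> wf_fm Q)"
| "wf_fm (FNot P) = wf_fm P"

fun ceval :: "(bexp \<Rightarrow> real \<Rightarrow> bexp \<Rightarrow> bool) \<Rightarrow> fm \<Rightarrow> bool" where
  "ceval v (GImp a c b) = v a c b"
| "ceval v (FAnd P Q) = (ceval v P \<and> ceval v Q)"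
| "ceval v (FOr P Q) = (ceval v P \<or> ceval v Q)"
| "ceval v (FNot P) = (\<not> ceval v P)"

text \<open>Substitution instances (by graded implications) of classical tautologies
  are exactly the formulas true under every valuation of their atoms.\<close>
definition ctaut :: "fm \<Rightarrow> bool" where
  "ctaut P \<longleftrightarrow> (\<forall>v. ceval v P)"

inductive derivable :: "(real \<Rightarrow> real \<Rightarrow> real) \<Rightarrow> fm set \<Rightarrow> fm \<Rightarrow> bool"
  for tn :: "real \<Rightarrow> real \<Rightarrow> real" and Th :: "fm set" where
  hyp: "P \<in> Th \<Longrightarrow> derivable tn Th P"
| taut: "wf_fm P \<Longrightarrow> ctaut P \<Longrightarrow> derivable tn Th P"
| and1: "d \<in> {0..1} \<Longrightarrow>
    derivable tn Th (FImp (FAnd (GImp a d b) (GImp a d g)) (GImp a d (BAnd b g)))"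
| and2: "derivable tn Th (GImp (BAnd a b) 1 a)"
| and3: "derivable tn Th (GImp (BAnd a b) 1 b)"
| or1: "d \<in> {0..1} \<Longrightarrow>
    derivable tn Th (FImp (FAnd (GImp a d g) (GImp b d g)) (GImp (BOr a b) d g))"
| or2: "derivable tn Th (GImp a 1 (BOr a b))"
| or3: "derivable tn Th (GImp b 1 (BOr a b))"
| odot1: "c \<in> {0..1} \<Longrightarrow> d \<in> {0..1} \<Longrightarrow>
    derivable tn Th (FImp (FAnd (GImp Top c a) (GImp Top d b)) (GImp Top (tn c d) (BOdot a b)))"
| odot2: "c \<in> {0..1} \<Longrightarrow> d \<in> {0..1} \<Longrightarrow>
    derivable tn Th (FImp (FAnd (GImp a c Bot) (GImp b d Bot)) (GImp (BOdot a b) (tconorm tn c d) Bot))"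
| odot3: "derivable tn Th (GImp Top 1 (BOdot Top Top))"
| neg1: "d \<in> {0..1} \<Longrightarrow> derivable tn Th (FImp (GImp a d b) (GImp (BNeg b) d (BNeg a)))"
| neg2: "derivable tn Th (GImp (BNeg (BNeg a)) 1 a)"
| neg3: "derivable tn Th (GImp a 1 (BNeg (BNeg a)))"
| top: "derivable tn Th (GImp a 1 Top)"
| bot: "derivable tn Th (GImp Bot 1 a)"
| zero: "derivable tn Th (GImp a 0 b)"
| refl: "c \<in> {0..1} \<Longrightarrow> derivable tn Th (GImp a c a)"
| inkons: "c \<in> {0..1} \<Longrightarrow> c > 0 \<Longrightarrow> derivable tn Th (FNot (GImp Top c Bot))"
| trans1: "c \<in> {0..1} \<Longrightarrow> d \<in> {0..1} \<Longrightarrow>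
    derivable tn Th (FImp (FAnd (GImp a c b) (GImp b d g)) (GImp a (luk_and c d) g))"
| trans2: "c \<in> {0..1} \<Longrightarrow> d \<in> {0..1} \<Longrightarrow>
    derivable tn Th (FImp (FAnd (GImp a c Bot) (GImp Top d b)) (GImp a (luk_or c d) b))"
| lin1: "derivable tn Th (FOr (GImp a 1 b) (GImp b 1 a))"
| lin2: "d \<in> {0..1} \<Longrightarrow> derivable tn Th (FOr (GImp Top d a) (GImp a (1 - d) Bot))"
| mp: "derivable tn Th P \<Longrightarrow> derivable tn Th (FImp P Q) \<Longrightarrow> derivable tn Th Q"

definition tau :: "bexp \<Rightarrow> real \<Rightarrow> fm set" where
  "tau a c = {GImp Top t a | t. t \<in> {0..1} \<and> t < c}
           \<union> {GImp a (1 - t) Bot | t. t \<in> {0..1} \<and> t > c}"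

end

theory Submission
  imports Defs
begin

lemma cont_near:
  assumes T: "continuous_tnorm tn" and c: "c \<in> {0..1}" and d: "d \<in> {0..1}"
  and e: "\<epsilon> > 0"
  shows "\<exists>r>0. \<forall>x\<in>{0..1}. \<forall>y\<in>{0..1}. \<bar>x - c\<bar> < r \<longrightarrow> \<bar>y - d\<bar> < r
            \<longrightarrow> \<bar>tn x y - tn c d\<bar> < \<epsilon>"
proof -
  have co: "continuous_on ({0..1} \<times> {0..1}) (\<lambda>(x, y). tn x y)"
    using T unfolding continuous_tnorm_def by blast
  have cd: "(c, d) \<in> {0..1::real} \<times> {0..1::real}" using c d by auto
  obtain \<delta> where dp: "\<delta> > 0" and H: "\<forall>p\<in>{0..1} \<times> {0..1}. dist p (c,d) < \<delta> \<longrightarrow>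
      dist ((\<lambda>(x, y). tn x y) p) ((\<lambda>(x, y). tn x y) (c,d)) < \<epsilon>"
    using co[unfolded continuous_on_iff] cd e by meson
  show ?thesis
  proof (intro exI[of _ "\<delta>/2"] conjI ballI impI)
    show "\<delta>/2 > 0" using dp by simp
    fix x y :: real assume x: "x \<in> {0..1}" and y: "y \<in> {0..1}"
      and hx: "\<bar>x - c\<bar> < \<delta>/2" and hy: "\<bar>y - d\<bar> < \<delta>/2"
    have "dist (x,y) (c,d) \<le> \<bar>x - c\<bar> + \<bar>y - d\<bar>"
      unfolding dist_Pair_Pair dist_real_def
      using sqrt_sum_squares_le_sum_abs by (metis power2_abs)
    also have "\<dots> < \<delta>" using hx hy by simp
    finally have "dist (x,y) (c,d) < \<delta>" .
    then have "dist (tn x y) (tn c d) < \<epsilon>" using H x y by auto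
    then show "\<bar>tn x y - tn c d\<bar> < \<epsilon>" by (simp add: dist_real_def)
  qed
qed

fun imps :: "fm list \<Rightarrow> fm \<Rightarrow> fm" where
  "imps [] Q = Q"
| "imps (P # Ps) Q = FImp P (imps Ps Q)"

lemma ceval_imps: "ceval v (imps Ps Q) = ((\<forall>P\<in>set Ps. ceval v P) \<longrightarrow> ceval v Q)"
  by (induction Ps) (auto simp: FImp_def)

lemma wf_imps: "wf_fm (imps Ps Q) = ((\<forall>P\<in>set Ps. wf_fm P) \<and> wf_fm Q)"
  by (induction Ps) (auto simp: FImp_def)

lemma derive_imps: "derivable tn Th (imps Ps Q) \<Longrightarrow> \<forall>P\<in>set Ps. derivable tn Th P \<Longrightarrow> derivable tn Th Q"
  by (induction Ps) (auto intro: derivable.mp)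

lemma der_wf:
  assumes T: "continuous_tnorm tn" and W: "\<forall>P\<in>Th. wf_fm P"
  shows "derivable tn Th P \<Longrightarrow> wf_fm P"
proof (induction rule: derivable.induct)
  case (odot1 c d a b)
  then show ?case using T unfolding continuous_tnorm_def by (auto simp: FImp_def)
next
  case (odot2 c d a b)
  then have "tn (1-c) (1-d) \<in> {0..1}" using T unfolding continuous_tnorm_def by auto
  then show ?case using odot2 by (auto simp: FImp_def tconorm_def)
next
  case (mp P Q) then show ?case by (simp add: FImp_def)
qed (use W in \<open>auto simp: FImp_def luk_and_def luk_or_def\<close>)

lemma classical:
  assumes T: "continuous_tnorm tn" and W: "\<forall>P\<in>Th. wf_fm P"
  and D: "\<forall>P\<in>set Ps. derivable tn Th P" and wQ: "wf_fm Q"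
  and V: "\<And>v. (\<forall>P\<in>set Ps. ceval v P) \<Longrightarrow> ceval v Q"
  shows "derivable tn Th Q"
proof -
  have "wf_fm (imps Ps Q)" using D der_wf[OF T W] wQ by (simp add: wf_imps)
  moreover have "ctaut (imps Ps Q)" using V by (simp add: ctaut_def ceval_imps)
  ultimately have "derivable tn Th (imps Ps Q)" by (rule derivable.taut)
  then show ?thesis using D by (rule derive_imps)
qed

lemma mp2:
  assumes T: "continuous_tnorm tn" and W: "\<forall>P\<in>Th. wf_fm P"
  and "derivable tn Th A" "derivable tn Th B" "derivable tn Th (FImp (FAnd A B) C)"
  shows "derivable tn Th C"
proof -
  have "wf_fm (FImp (FAnd A B) C)" using der_wf[OF T W] assms(5) .
  then have "wf_fm C" by (simp add: FImp_def)
  show ?thesis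
    by (rule classical[OF T W, of "[A, B, FImp (FAnd A B) C]"])
       (use assms \<open>wf_fm C\<close> in \<open>auto simp: FImp_def\<close>)
qed

lemma tr1:
  assumes T: "continuous_tnorm tn" and W: "\<forall>P\<in>Th. wf_fm P"
  and "c \<in> {0..1}" "d \<in> {0..1}"
  and "derivable tn Th (GImp a c b)" "derivable tn Th (GImp b d g)"
  shows "derivable tn Th (GImp a (luk_and c d) g)"
  using mp2[OF T W assms(5,6) derivable.trans1[OF assms(3,4)]] .

lemma tr1':
  assumes T: "continuous_tnorm tn" and W: "\<forall>P\<in>Th. wf_fm P"
  and "c \<in> {0..1}" "d \<in> {0..1}" "e = luk_and c d"
  and "derivable tn Th (GImp a c b)" "derivable tn Th (GImp b d g)"
  shows "derivable tn Th (GImp a e g)"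
  using tr1[OF T W assms(3,4,6,7)] assms(5) by simp

lemma weaken:
  assumes T: "continuous_tnorm tn" and W: "\<forall>P\<in>Th. wf_fm P"
  and "derivable tn Th (GImp a c b)" "0 \<le> c'" "c' \<le> c" "c \<le> 1"
  shows "derivable tn Th (GImp a c' b)"
proof -
  have r: "derivable tn Th (GImp b (1 - c + c') b)"
    by (rule derivable.refl) (use assms in auto)
  show ?thesis
    by (rule tr1'[OF T W _ _ _ assms(3) r]) (use assms in \<open>auto simp: luk_and_def\<close>)
qed

lemma tn_props:
  assumes T: "continuous_tnorm tn"
  shows "\<And>x y. x \<in> {0..1} \<Longrightarrow> y \<in> {0..1} \<Longrightarrow> tn x y \<in> {0..1}"
    and "\<And>x y. x \<in> {0..1} \<Longrightarrow> y \<in> {0..1} \<Longrightarrow> tn x y = tn y x"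
    and "\<And>x. x \<in> {0..1} \<Longrightarrow> tn x 1 = x"
    and "\<And>x. x \<in> {0..1} \<Longrightarrow> tn 1 x = x"
    and "\<And>x y z. x \<in> {0..1} \<Longrightarrow> y \<in> {0..1} \<Longrightarrow> z \<in> {0..1} \<Longrightarrow> x \<le> y \<Longrightarrow> tn x z \<le> tn y z"
    and "\<And>y. y \<in> {0..1} \<Longrightarrow> tn 0 y = 0"
    and "\<And>y. y \<in> {0..1} \<Longrightarrow> tn y 0 = 0"
proof -
  note D = T[unfolded continuous_tnorm_def]
  show 1: "\<And>x y. x \<in> {0..1} \<Longrightarrow> y \<in> {0..1} \<Longrightarrow> tn x y \<in> {0..1}" using D by blast
  show 2: "\<And>x y. x \<in> {0..1} \<Longrightarrow> y \<in> {0..1} \<Longrightarrow> tn x y = tn y x" using D by blast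
  show 3: "\<And>x. x \<in> {0..1} \<Longrightarrow> tn x 1 = x" using D by blast
  show 4: "\<And>x. x \<in> {0..1} \<Longrightarrow> tn 1 x = x" using 2 3 by fastforce
  show 5: "\<And>x y z. x \<in> {0..1} \<Longrightarrow> y \<in> {0..1} \<Longrightarrow> z \<in> {0..1} \<Longrightarrow> x \<le> y \<Longrightarrow> tn x z \<le> tn y z"
    using D by blast
  show 6: "\<And>y. y \<in> {0..1} \<Longrightarrow> tn 0 y = 0"
  proof -
    fix y :: real assume y: "y \<in> {0..1}"
    have "tn 0 y = tn y 0" using 2 y by simp
    also have "\<dots> \<le> tn 1 0" using 5[of y 1 0] y by simp
    also have "\<dots> = 0" using 4[of 0] by simp
    finally show "tn 0 y = 0" using 1[of 0 y] y by simp
  qed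
  then show "\<And>y. y \<in> {0..1} \<Longrightarrow> tn y 0 = 0" using 2 by fastforce
qed

lemma part_and:
  assumes T: "continuous_tnorm tn" and W: "\<forall>P\<in>Th. wf_fm P"
  and A1: "\<forall>t. t \<in> {0..1} \<longrightarrow> t < c \<longrightarrow> derivable tn Th (GImp Top t a)"
  and A2: "\<forall>t. t \<in> {0..1} \<longrightarrow> t > c \<longrightarrow> derivable tn Th (GImp a (1-t) Bot)"
  and B1: "\<forall>t. t \<in> {0..1} \<longrightarrow> t < d \<longrightarrow> derivable tn Th (GImp Top t b)"
  and B2: "\<forall>t. t \<in> {0..1} \<longrightarrow> t > d \<longrightarrow> derivable tn Th (GImp b (1-t) Bot)"
  shows "\<forall>t. t \<in> {0..1} \<longrightarrow> t < min c d \<longrightarrow> derivable tn Th (GImp Top t (BAnd a b))"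
    and "\<forall>t. t \<in> {0..1} \<longrightarrow> t > min c d \<longrightarrow> derivable tn Th (GImp (BAnd a b) (1-t) Bot)"
proof (safe)
  fix t :: real assume t: "t \<in> {0..1}" "t < min c d"
  show "derivable tn Th (GImp Top t (BAnd a b))"
    using mp2[OF T W _ _ derivable.and1[OF t(1)]] A1 B1 t by auto
next
  fix t :: real assume t: "t \<in> {0..1}" "t > min c d"
  show "derivable tn Th (GImp (BAnd a b) (1-t) Bot)"
  proof (cases "t > c")
    case True
    have X: "derivable tn Th (GImp a (1-t) Bot)" using A2 True t by auto
    show ?thesis
      by (rule tr1'[OF T W _ _ _ derivable.and2 X]) (use t in \<open>auto simp: luk_and_def\<close>)
  next
    case False
    then have "t > d" using t by auto
    have X: "derivable tn Th (GImp b (1-t) Bot)" using B2 \<open>t > d\<close> t by auto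
    show ?thesis
      by (rule tr1'[OF T W _ _ _ derivable.and3 X]) (use t in \<open>auto simp: luk_and_def\<close>)
  qed
qed

lemma part_or:
  assumes T: "continuous_tnorm tn" and W: "\<forall>P\<in>Th. wf_fm P"
  and A1: "\<forall>t. t \<in> {0..1} \<longrightarrow> t < c \<longrightarrow> derivable tn Th (GImp Top t a)"
  and A2: "\<forall>t. t \<in> {0..1} \<longrightarrow> t > c \<longrightarrow> derivable tn Th (GImp a (1-t) Bot)"
  and B1: "\<forall>t. t \<in> {0..1} \<longrightarrow> t < d \<longrightarrow> derivable tn Th (GImp Top t b)"
  and B2: "\<forall>t. t \<in> {0..1} \<longrightarrow> t > d \<longrightarrow> derivable tn Th (GImp b (1-t) Bot)"
  shows "\<forall>t. t \<in> {0..1} \<longrightarrow> t < max c d \<longrightarrow> derivable tn Th (GImp Top t (BOr a b))"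
    and "\<forall>t. t \<in> {0..1} \<longrightarrow> t > max c d \<longrightarrow> derivable tn Th (GImp (BOr a b) (1-t) Bot)"
proof (safe)
  fix t :: real assume t: "t \<in> {0..1}" "t > max c d"
  then have "1 - t \<in> {0..1}" by auto
  show "derivable tn Th (GImp (BOr a b) (1-t) Bot)"
    using mp2[OF T W _ _ derivable.or1[OF \<open>1 - t \<in> {0..1}\<close>]] A2 B2 t by auto
next
  fix t :: real assume t: "t \<in> {0..1}" "t < max c d"
  show "derivable tn Th (GImp Top t (BOr a b))"
  proof (cases "t < c")
    case True
    have X: "derivable tn Th (GImp Top t a)" using A1 True t by auto
    show ?thesis
      by (rule tr1'[OF T W _ _ _ X derivable.or2]) (use t in \<open>auto simp: luk_and_def\<close>)
  next
    case False
    then have "t < d" using t by auto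
    have X: "derivable tn Th (GImp Top t b)" using B1 \<open>t < d\<close> t by auto
    show ?thesis
      by (rule tr1'[OF T W _ _ _ X derivable.or3]) (use t in \<open>auto simp: luk_and_def\<close>)
  qed
qed

lemma mp1:
  assumes "derivable tn Th A" "derivable tn Th (FImp A C)"
  shows "derivable tn Th C"
  using derivable.mp assms .

lemma part_neg:
  assumes T: "continuous_tnorm tn" and W: "\<forall>P\<in>Th. wf_fm P"
  and A1: "\<forall>t. t \<in> {0..1} \<longrightarrow> t < c \<longrightarrow> derivable tn Th (GImp Top t a)"
  and A2: "\<forall>t. t \<in> {0..1} \<longrightarrow> t > c \<longrightarrow> derivable tn Th (GImp a (1-t) Bot)"
  shows "\<forall>t. t \<in> {0..1} \<longrightarrow> t < 1 - c \<longrightarrow> derivable tn Th (GImp Top t (BNeg a))"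
    and "\<forall>t. t \<in> {0..1} \<longrightarrow> t > 1 - c \<longrightarrow> derivable tn Th (GImp (BNeg a) (1-t) Bot)"
proof (safe)
  have one: "(1::real) \<in> {0..1}" by simp
  have TB: "derivable tn Th (GImp Top 1 (BNeg Bot))"
  proof -
    have "derivable tn Th (GImp (BNeg (BNeg Top)) 1 (BNeg Bot))"
      using mp1[OF derivable.bot derivable.neg1[OF one]] .
    then show ?thesis
      using tr1'[OF T W one one _ derivable.neg3] by (simp add: luk_and_def)
  qed
  have NT: "derivable tn Th (GImp (BNeg Top) 1 Bot)"
  proof -
    have "derivable tn Th (GImp (BNeg Top) 1 (BNeg (BNeg Bot)))"
      using mp1[OF derivable.top derivable.neg1[OF one]] .
    then show ?thesis
      using tr1'[OF T W one one _ _ derivable.neg2] by (simp add: luk_and_def)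
  qed
  fix t :: real assume t: "t \<in> {0..1}" "t < 1 - c"
  then have "derivable tn Th (GImp a t Bot)" using A2[rule_format, of "1 - t"] by auto
  then have "derivable tn Th (GImp (BNeg Bot) t (BNeg a))"
    using mp1 derivable.neg1[OF t(1)] by blast
  then show "derivable tn Th (GImp Top t (BNeg a))"
    using tr1'[OF T W one t(1) _ TB] t by (simp add: luk_and_def)
next
  have one: "(1::real) \<in> {0..1}" by simp
  have NT: "derivable tn Th (GImp (BNeg Top) 1 Bot)"
  proof -
    have "derivable tn Th (GImp (BNeg Top) 1 (BNeg (BNeg Bot)))"
      using mp1[OF derivable.top derivable.neg1[OF one]] .
    then show ?thesis
      using tr1'[OF T W one one _ _ derivable.neg2] by (simp add: luk_and_def)
  qed
  fix t :: real assume t: "t \<in> {0..1}" "t > 1 - c"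
  then have s: "1 - t \<in> {0..1}" by auto
  have "derivable tn Th (GImp Top (1-t) a)" using A1 t by auto
  then have "derivable tn Th (GImp (BNeg a) (1-t) (BNeg Top))"
    using mp1 derivable.neg1[OF s] by blast
  then show "derivable tn Th (GImp (BNeg a) (1-t) Bot)"
    using tr1'[OF T W s one _ _ NT] t by (simp add: luk_and_def)
qed

lemma part_odot:
  assumes T: "continuous_tnorm tn" and W: "\<forall>P\<in>Th. wf_fm P"
  and c: "c \<in> {0..1}" and d: "d \<in> {0..1}"
  and A1: "\<forall>t. t \<in> {0..1} \<longrightarrow> t < c \<longrightarrow> derivable tn Th (GImp Top t a)"
  and A2: "\<forall>t. t \<in> {0..1} \<longrightarrow> t > c \<longrightarrow> derivable tn Th (GImp a (1-t) Bot)"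
  and B1: "\<forall>t. t \<in> {0..1} \<longrightarrow> t < d \<longrightarrow> derivable tn Th (GImp Top t b)"
  and B2: "\<forall>t. t \<in> {0..1} \<longrightarrow> t > d \<longrightarrow> derivable tn Th (GImp b (1-t) Bot)"
  shows "\<forall>t. t \<in> {0..1} \<longrightarrow> t < tn c d \<longrightarrow> derivable tn Th (GImp Top t (BOdot a b))"
    and "\<forall>t. t \<in> {0..1} \<longrightarrow> t > tn c d \<longrightarrow> derivable tn Th (GImp (BOdot a b) (1-t) Bot)"
proof (safe)
  note P = tn_props[OF T]
  fix t :: real assume t: "t \<in> {0..1}" "t < tn c d"
  have cp: "c > 0"
  proof (rule ccontr)
    assume "\<not> c > 0" then have "c = 0" using c by auto
    then show False using P(6)[OF d] t by auto
  qed
  have dp: "d > 0"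
  proof (rule ccontr)
    assume "\<not> d > 0" then have "d = 0" using d by auto
    then show False using P(7)[OF c] t by auto
  qed
  obtain r where r: "r > 0" and R: "\<forall>x\<in>{0..1}. \<forall>y\<in>{0..1}. \<bar>x - c\<bar> < r \<longrightarrow> \<bar>y - d\<bar> < r
            \<longrightarrow> \<bar>tn x y - tn c d\<bar> < tn c d - t"
    using cont_near[OF T c d, of "tn c d - t"] t by auto
  define x where "x = max 0 (c - r/2)"
  define y where "y = max 0 (d - r/2)"
  have x: "x \<in> {0..1}" "x < c" "\<bar>x - c\<bar> < r" using c cp r unfolding x_def by auto
  have y: "y \<in> {0..1}" "y < d" "\<bar>y - d\<bar> < r" using d dp r unfolding y_def by auto
  have "\<bar>tn x y - tn c d\<bar> < tn c d - t" using R x y by blast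
  then have le: "t \<le> tn x y" by linarith
  have "derivable tn Th (GImp Top (tn x y) (BOdot a b))"
    using mp2[OF T W _ _ derivable.odot1[OF x(1) y(1)]] A1 B1 x y by auto
  then show "derivable tn Th (GImp Top t (BOdot a b))"
    by (rule weaken[OF T W]) (use le t P(1)[OF x(1) y(1)] in auto)
next
  note P = tn_props[OF T]
  fix t :: real assume t: "t \<in> {0..1}" "t > tn c d"
  have good: "\<And>x y. x \<in> {0..1} \<Longrightarrow> y \<in> {0..1} \<Longrightarrow> (x > c \<or> x = 1) \<Longrightarrow> (y > d \<or> y = 1)
      \<Longrightarrow> tn x y \<le> t \<Longrightarrow> derivable tn Th (GImp (BOdot a b) (1-t) Bot)"
  proof -
    fix x y :: real assume x: "x \<in> {0..1}" and y: "y \<in> {0..1}" and hx: "x > c \<or> x = 1"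
      and hy: "y > d \<or> y = 1" and le: "tn x y \<le> t"
    have da: "derivable tn Th (GImp a (1-x) Bot)" using hx A2 x derivable.zero by auto
    have db: "derivable tn Th (GImp b (1-y) Bot)" using hy B2 y derivable.zero by auto
    have x': "1 - x \<in> {0..1}" and y': "1 - y \<in> {0..1}" using x y by auto
    have "derivable tn Th (GImp (BOdot a b) (tconorm tn (1-x) (1-y)) Bot)"
      using mp2[OF T W da db derivable.odot2[OF x' y']] .
    then have "derivable tn Th (GImp (BOdot a b) (1 - tn x y) Bot)" by (simp add: tconorm_def)
    then show "derivable tn Th (GImp (BOdot a b) (1-t) Bot)"
      by (rule weaken[OF T W]) (use le t P(1)[OF x y] in auto)
  qed
  show "derivable tn Th (GImp (BOdot a b) (1-t) Bot)"
  proof (cases "c = 1")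
    case True
    then have "t > d" using t P(4)[OF d] by simp
    show ?thesis by (rule good[of 1 t]) (use t \<open>t > d\<close> P(4)[OF t(1)] in auto)
  next
    case c1: False
    show ?thesis
    proof (cases "d = 1")
      case True
      then have "t > c" using t P(3)[OF c] by simp
      show ?thesis by (rule good[of t 1]) (use t \<open>t > c\<close> P(3)[OF t(1)] in auto)
    next
      case d1: False
      obtain r where r: "r > 0" and R: "\<forall>x\<in>{0..1}. \<forall>y\<in>{0..1}. \<bar>x - c\<bar> < r \<longrightarrow> \<bar>y - d\<bar> < r
            \<longrightarrow> \<bar>tn x y - tn c d\<bar> < t - tn c d"
        using cont_near[OF T c d, of "t - tn c d"] t by auto
      define x where "x = min 1 (c + r/2)"
      define y where "y = min 1 (d + r/2)"
      have x: "x \<in> {0..1}" "x > c" "\<bar>x - c\<bar> < r" using c c1 r unfolding x_def by auto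
      have y: "y \<in> {0..1}" "y > d" "\<bar>y - d\<bar> < r" using d d1 r unfolding y_def by auto
      have "\<bar>tn x y - tn c d\<bar> < t - tn c d" using R x y by blast
      then have le: "tn x y \<le> t" by linarith
      show ?thesis by (rule good[OF x(1) y(1)]) (use x y le in auto)
    qed
  qed
qed

lemma tau_iff: "(\<forall>P\<in>tau a c. derivable tn Th P) \<longleftrightarrow>
   ((\<forall>t. t \<in> {0..1} \<longrightarrow> t < c \<longrightarrow> derivable tn Th (GImp Top t a)) \<and>
    (\<forall>t. t \<in> {0..1} \<longrightarrow> t > c \<longrightarrow> derivable tn Th (GImp a (1-t) Bot)))"
  unfolding tau_def by blast

theorem mainTheorem3:
  fixes tn :: "real \<Rightarrow> real \<Rightarrow> real" and Th :: "fm set"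
    and a b :: bexp and c d :: real
  assumes "continuous_tnorm tn"
    and "\<forall>P\<in>Th. wf_fm P"
    and "c \<in> {0..1}" and "d \<in> {0..1}"
    and "\<forall>P\<in>tau a c. derivable tn Th P"
    and "\<forall>P\<in>tau b d. derivable tn Th P"
  shows "(\<forall>P\<in>tau (BAnd a b) (min c d). derivable tn Th P)
       \<and> (\<forall>P\<in>tau (BOr a b) (max c d). derivable tn Th P)
       \<and> (\<forall>P\<in>tau (BOdot a b) (tn c d). derivable tn Th P)
       \<and> (\<forall>P\<in>tau (BNeg a) (1 - c). derivable tn Th P)"
proof -
  note A = assms(5)[unfolded tau_iff] and B = assms(6)[unfolded tau_iff]
  show ?thesis unfolding tau_iff
    using part_and[OF assms(1,2) A[THEN conjunct1] A[THEN conjunct2] B[THEN conjunct1] B[THEN conjunct2]]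
      part_or[OF assms(1,2) A[THEN conjunct1] A[THEN conjunct2] B[THEN conjunct1] B[THEN conjunct2]]
      part_odot[OF assms(1,2,3,4) A[THEN conjunct1] A[THEN conjunct2] B[THEN conjunct1] B[THEN conjunct2]]
      part_neg[OF assms(1,2) A[THEN conjunct1] A[THEN conjunct2]]
    by blast
qed

end
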